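(* Let $\lambda$ be the smallest cardinal $\kappa$ with $2^\kappa>\mathfrak{c}$. For every free ultrafilter $\mathcal{F}$ on $\mathbb{Z}$ there is a chain $\mathcal{K}\subset\mathcal{L}_0$ with $|\mathcal{K}|=2^\lambda$ such that $\tau[\mathcal{F}]\subset\tau$ for every $\tau\in\mathcal{K}$.
   Context: $\mathfrak{c}=|\mathbb{R}|$. $\eta$ denotes the Euclidean topology on $\mathbb{R}$. $\mathcal{L}$ denotes the family of all Hausdorff topologies $\tau$ on $\mathbb{R}$ with $\tau\subset\eta$. For $\tau\in\mathcal{L}$ and $a\in\mathbb{R}$ let $\mathcal{N}_\tau(a)$ be the neighborhood filter of $a$; let $C(\tau)$ be the set of all $a$ with $\mathcal{N}_\tau(a)\neq\mathcal{N}_\eta(a)$. $\mathcal{L}_0:=\{\tau\in\mathcal{L}\mid C(\tau)\subset\{0\}\}$. For a free ultrafilter $\mathcal{F}$ on $\mathbb{Z}$, $\tau[\mathcal{F}]$ is the topology on $\mathbb{R}$ in which $U\subset\mathbb{R}$ is open iff $U$ is Euclidean open and ($0\notin U$ or $U\cap\mathbb{Z}\in\mathcal{F}$). A chain is a family of topologies totally ordered by inclusion. *)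

theory Defs
  imports "HOL-Analysis.Analysis" "HOL-Library.Equipollence"
begin

definition topo_le :: "'a topology \<Rightarrow> 'a topology \<Rightarrow> bool" where
  "topo_le \<sigma> \<tau> \<longleftrightarrow> (\<forall>U. openin \<sigma> U \<longrightarrow> openin \<tau> U)"

definition coarser_Hausdorff :: "real topology set" where
  "coarser_Hausdorff = {\<tau>. topspace \<tau> = UNIV \<and> Hausdorff_space \<tau> \<and> topo_le \<tau> euclidean}"

definition nbhds :: "'a topology \<Rightarrow> 'a \<Rightarrow> 'a set set" where
  "nbhds \<tau> a = {V. \<exists>U. openin \<tau> U \<and> a \<in> U \<and> U \<subseteq> V}"

definition C_set :: "real topology \<Rightarrow> real set" where
  "C_set \<tau> = {a. nbhds \<tau> a \<noteq> nbhds euclidean a}"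

definition L0 :: "real topology set" where
  "L0 = {\<tau> \<in> coarser_Hausdorff. C_set \<tau> \<subseteq> {0}}"

definition free_ultrafilter_on :: "'a set set \<Rightarrow> bool" where
  "free_ultrafilter_on F \<longleftrightarrow>
     UNIV \<in> F \<and> {} \<notin> F \<and>
     (\<forall>A B. A \<in> F \<longrightarrow> A \<subseteq> B \<longrightarrow> B \<in> F) \<and>
     (\<forall>A B. A \<in> F \<longrightarrow> B \<in> F \<longrightarrow> A \<inter> B \<in> F) \<and>
     (\<forall>A. A \<in> F \<or> - A \<in> F) \<and>
     (\<forall>x. {x} \<notin> F)"

definition tauF :: "int set set \<Rightarrow> real topology" where
  "tauF F = topology (\<lambda>U. open U \<and> (0 \<notin> U \<or> {n::int. real_of_int n \<in> U} \<in> F))"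

definition is_chain_topo :: "'a topology set \<Rightarrow> bool" where
  "is_chain_topo K \<longleftrightarrow> (\<forall>\<sigma>\<in>K. \<forall>\<tau>\<in>K. topo_le \<sigma> \<tau> \<or> topo_le \<tau> \<sigma>)"

text \<open>S has cardinality lambda = least kappa with 2^kappa > c. Since lambda \<le> c,
  it suffices to test against subsets of R.\<close>
definition lambda_set :: "real set \<Rightarrow> bool" where
  "lambda_set S \<longleftrightarrow> \<not> (Pow S \<lesssim> (UNIV::real set)) \<and>
     (\<forall>T \<subseteq> (UNIV::real set). T \<prec> S \<longrightarrow> Pow T \<lesssim> (UNIV::real set))"

end

theory Submission
  imports Defs
begin


section \<open>Ultrafilter facts\<close>

lemma fu_up: "free_ultrafilter_on F \<Longrightarrow> A \<in> F \<Longrightarrow> A \<subseteq> B \<Longrightarrow> B \<in> F"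
  unfolding free_ultrafilter_on_def by blast

lemma fu_int: "free_ultrafilter_on F \<Longrightarrow> A \<in> F \<Longrightarrow> B \<in> F \<Longrightarrow> A \<inter> B \<in> F"
  unfolding free_ultrafilter_on_def by blast

lemma fu_UNIV: "free_ultrafilter_on F \<Longrightarrow> UNIV \<in> F"
  unfolding free_ultrafilter_on_def by blast

lemma fu_sub0: "free_ultrafilter_on F \<Longrightarrow> A \<subseteq> {x} \<Longrightarrow> A \<notin> F"
  unfolding free_ultrafilter_on_def by blast

lemma fu_cofinite: 
  assumes "free_ultrafilter_on F" "finite A" shows "- A \<in> F"
  using assms(2)
proof (induction A rule: finite_induct)
  case empty
  then show ?case using fu_UNIV[OF assms(1)] by simp
next
  case (insert x A)
  have "- {x} \<in> F" using assms(1) unfolding free_ultrafilter_on_def by blast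
  then have "- A \<inter> - {x} \<in> F" using fu_int[OF assms(1)] insert by blast
  moreover have "- A \<inter> - {x} = - insert x A" by blast
  ultimately show ?case by simp
qed

definition yy :: "nat \<Rightarrow> real" where "yy k = (1/2)^(k+2)"
definition xs :: "real \<Rightarrow> nat \<Rightarrow> real" where "xs q k = yy k + q * (yy k)^2"

lemma yy_pos: "0 < yy k" and yy_le: "yy k \<le> 1/4"
proof -
  show "0 < yy k" by (simp add: yy_def)
  have "(1/2::real)^(k+2) \<le> (1/2)^2" by (rule power_decreasing) auto
  then show "yy k \<le> 1/4" by (simp add: yy_def power2_eq_square)
qed

lemma xs_bounds: assumes "0 \<le> q" "q < 1" shows "0 < xs q k" "xs q k < 1/3" "xs q k \<le> 2 * yy k"
proof -
  have y: "0 < yy k" "yy k \<le> 1/4" using yy_pos yy_le by auto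
  have a: "q * (yy k)^2 \<le> 1 * (yy k)^2" using assms by (intro mult_right_mono) auto
  have b: "(yy k)^2 \<le> yy k / 4" using y by (simp add: power2_eq_square mult_left_le)
  show "xs q k < 1/3" "xs q k \<le> 2 * yy k" using y a b unfolding xs_def by linarith+
  show "0 < xs q k" using y assms unfolding xs_def by (simp add: add_pos_nonneg)
qed

lemma xs_small: assumes "0 \<le> q" "q < 1" "0 < e" shows "\<exists>k. xs q k < e"
proof -
  obtain n where n: "(1/2::real)^n < e/2" using real_arch_pow_inv[of "e/2" "1/2"] assms by auto
  have "yy n \<le> (1/2)^n" unfolding yy_def by (rule power_decreasing) auto
  then show ?thesis using xs_bounds(3)[OF assms(1,2), of n] n by (intro exI[of _ n]) auto
qed

lemma yy_mono: assumes "k < j" shows "2 * yy j \<le> yy k"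
proof -
  have "(1/2::real)^(j+2) \<le> (1/2)^(k+3)" by (rule power_decreasing) (use assms in auto)
  moreover have "(1/2::real)^(k+3) = (1/2)^(k+2) / 2" by (simp add: power_add power3_eq_cube power2_eq_square)
  ultimately show ?thesis unfolding yy_def by linarith
qed

lemma xs_lt: assumes "0 \<le> q" "q < 1" "0 \<le> q'" "q' < 1" "k < j" shows "xs q' j < xs q k"
proof -
  have y: "0 < yy j" "yy j \<le> 1/4" using yy_pos yy_le by auto
  have "q' * (yy j)^2 < 1 * (yy j)^2" using assms y by (intro mult_strict_right_mono) auto
  moreover have "(yy j)^2 \<le> yy j" using y by (simp add: power2_eq_square mult_left_le)
  moreover have "yy k \<le> xs q k" using assms unfolding xs_def by simp
  ultimately show ?thesis using yy_mono[OF assms(5)] unfolding xs_def by linarith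
qed

lemma xs_inj: assumes "0 \<le> q" "q < 1" "0 \<le> q'" "q' < 1" "xs q k = xs q' j" shows "q = q'"
proof -
  consider "k < j" | "j < k" | "k = j" by linarith
  then show ?thesis
  proof cases
    case 1 then show ?thesis using xs_lt[OF assms(1-4) 1] assms(5) by simp
  next
    case 2 then show ?thesis using xs_lt[OF assms(3,4,1,2) 2] assms(5) by simp
  next
    case 3 then show ?thesis using assms(5) yy_pos[of k] unfolding xs_def by simp
  qed
qed

lemma xs_lim: "xs q \<longlonglongrightarrow> 0"
proof -
  have "yy \<longlonglongrightarrow> 0" unfolding yy_def
    by (subst power_add) (intro tendsto_mult_left_zero LIMSEQ_power_zero, simp)
  then have "(\<lambda>k. yy k + q * (yy k)^2) \<longlonglongrightarrow> 0 + q * 0^2"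
    by (intro tendsto_intros)
  then show ?thesis unfolding xs_def[abs_def] by simp
qed



definition HH :: "int set set \<Rightarrow> real \<Rightarrow> real set \<Rightarrow> bool" where
  "HH F q U \<longleftrightarrow> {n::int. \<exists>e>0. \<forall>k. xs q k < e \<longrightarrow> real_of_int n + xs q k \<in> U} \<in> F"

definition tpred :: "int set set \<Rightarrow> real set \<Rightarrow> real set \<Rightarrow> bool" where
  "tpred F A U \<longleftrightarrow> open U \<and> (0 \<in> U \<longrightarrow> (\<forall>q \<in> {0..<1} - A. HH F q U))"

definition tauA :: "int set set \<Rightarrow> real set \<Rightarrow> real topology" where
  "tauA F A = topology (tpred F A)"

lemma HH_mono: "free_ultrafilter_on F \<Longrightarrow> HH F q U \<Longrightarrow> U \<subseteq> V \<Longrightarrow> HH F q V"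
  unfolding HH_def by (erule fu_up) auto

lemma HH_int: assumes "free_ultrafilter_on F" "HH F q U" "HH F q V" shows "HH F q (U \<inter> V)"
proof -
  let ?S = "\<lambda>U. {n::int. \<exists>e>0. \<forall>k. xs q k < e \<longrightarrow> real_of_int n + xs q k \<in> U}"
  have "?S U \<inter> ?S V \<in> F" using assms fu_int unfolding HH_def by blast
  moreover have "?S U \<inter> ?S V \<subseteq> ?S (U \<inter> V)"
  proof
    fix n assume "n \<in> ?S U \<inter> ?S V"
    then obtain e1 e2 where "e1 > 0" "e2 > 0" "\<forall>k. xs q k < e1 \<longrightarrow> real_of_int n + xs q k \<in> U"
      "\<forall>k. xs q k < e2 \<longrightarrow> real_of_int n + xs q k \<in> V" by auto
    then show "n \<in> ?S (U \<inter> V)" by (intro CollectI exI[of _ "min e1 e2"]) auto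
  qed
  ultimately show ?thesis unfolding HH_def using fu_up[OF assms(1)] by blast
qed

lemma istop_tpred: assumes "free_ultrafilter_on F" shows "istopology (tpred F A)"
  unfolding istopology_def
proof (intro conjI allI impI ballI)
  fix S T assume "tpred F A S" "tpred F A T"
  then show "tpred F A (S \<inter> T)" unfolding tpred_def using HH_int[OF assms] by auto
next
  fix K assume K: "\<forall>K\<in>K. tpred F A K"
  show "tpred F A (\<Union>K)" unfolding tpred_def
  proof (intro conjI impI ballI)
    show "open (\<Union>K)" using K unfolding tpred_def by auto
    fix q assume "0 \<in> \<Union>K" "q \<in> {0..<1} - A"
    then obtain U where "U \<in> K" "0 \<in> U" by auto
    then show "HH F q (\<Union>K)" using K \<open>q \<in> _\<close> HH_mono[OF assms] unfolding tpred_def by blast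
  qed
qed

lemma openin_tauA: "free_ultrafilter_on F \<Longrightarrow> openin (tauA F A) U \<longleftrightarrow> tpred F A U"
  unfolding tauA_def using istop_tpred by simp

definition fpred :: "int set set \<Rightarrow> real set \<Rightarrow> bool" where
  "fpred F U \<longleftrightarrow> open U \<and> (0 \<notin> U \<or> {n::int. real_of_int n \<in> U} \<in> F)"

lemma istop_fpred: assumes "free_ultrafilter_on F" shows "istopology (fpred F)"
  unfolding istopology_def
proof (intro conjI allI impI ballI)
  fix S T assume "fpred F S" "fpred F T"
  moreover have "{n::int. real_of_int n \<in> S \<inter> T} = {n. real_of_int n \<in> S} \<inter> {n. real_of_int n \<in> T}" by auto
  ultimately show "fpred F (S \<inter> T)" unfolding fpred_def using fu_int[OF assms] by auto
next
  fix K assume K: "\<forall>K\<in>K. fpred F K"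
  show "fpred F (\<Union>K)" unfolding fpred_def
  proof (intro conjI)
    show "open (\<Union>K)" using K unfolding fpred_def by auto
    show "0 \<notin> \<Union> K \<or> {n. real_of_int n \<in> \<Union> K} \<in> F"
    proof (cases "0 \<in> \<Union>K")
      case True
      then obtain U where "U \<in> K" "0 \<in> U" by auto
      then have "{n. real_of_int n \<in> U} \<in> F" using K unfolding fpred_def by blast
      then show ?thesis by (rule disjI2[OF fu_up[OF assms]]) (use \<open>U \<in> K\<close> in auto)
    qed simp
  qed
qed

lemma openin_tauF: "free_ultrafilter_on F \<Longrightarrow> openin (tauF F) U \<longleftrightarrow> fpred F U"
  unfolding tauF_def using istop_fpred unfolding fpred_def[abs_def] by simp

lemma tauF_le_tauA: assumes "free_ultrafilter_on F" shows "topo_le (tauF F) (tauA F A)"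
  unfolding topo_le_def
proof (intro allI impI)
  fix U assume "openin (tauF F) U"
  then have U: "open U" "0 \<in> U \<Longrightarrow> {n::int. real_of_int n \<in> U} \<in> F"
    using openin_tauF[OF assms] unfolding fpred_def by auto
  have "HH F q U" if "0 \<in> U" "q \<in> {0..<1}" for q
  proof -
    have "{n::int. real_of_int n \<in> U} \<subseteq> {n::int. \<exists>e>0. \<forall>k. xs q k < e \<longrightarrow> real_of_int n + xs q k \<in> U}"
    proof
      fix n assume "n \<in> {n::int. real_of_int n \<in> U}"
      then obtain e where e: "e > 0" "ball (real_of_int n) e \<subseteq> U" using U(1) open_contains_ball by blast
      have "real_of_int n + xs q k \<in> U" if "xs q k < e" for k
        using e that xs_bounds(1)[of q k] \<open>q \<in> _\<close> by (intro subsetD[OF e(2)]) (auto simp: dist_real_def)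
      then show "n \<in> {n::int. \<exists>e>0. \<forall>k. xs q k < e \<longrightarrow> real_of_int n + xs q k \<in> U}" using e by auto
    qed
    then show ?thesis unfolding HH_def using U(2)[OF that(1)] fu_up[OF assms] by blast
  qed
  then show "openin (tauA F A) U" using openin_tauA[OF assms] U unfolding tpred_def by auto
qed

lemma tauA_mono: assumes "free_ultrafilter_on F" "A \<subseteq> B" shows "topo_le (tauA F A) (tauA F B)"
  unfolding topo_le_def openin_tauA[OF assms(1)] tpred_def using assms(2) by blast

lemma tauA_open_noz: assumes "free_ultrafilter_on F" "open U" "0 \<notin> U" shows "openin (tauA F A) U"
  using assms openin_tauA tpred_def by auto

lemma tauA_open: assumes "free_ultrafilter_on F" "openin (tauA F A) U" shows "open U"
  using assms openin_tauA tpred_def by auto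

lemma topspace_tauA: assumes "free_ultrafilter_on F" shows "topspace (tauA F A) = UNIV"
proof -
  have "HH F q UNIV" for q unfolding HH_def using fu_UNIV[OF assms] by (simp add: exI[of _ 1])
  then have "openin (tauA F A) UNIV" unfolding openin_tauA[OF assms] tpred_def by auto
  then show ?thesis by (metis openin_subset top.extremum_uniqueI)
qed

lemma finite_int_bounded: "finite {n::int. \<bar>real_of_int n - y\<bar> \<le> r}"
proof (rule finite_subset)
  show "{n::int. \<bar>real_of_int n - y\<bar> \<le> r} \<subseteq> {\<lfloor>y - r\<rfloor> .. \<lceil>y + r\<rceil>}"
    by (auto simp: abs_le_iff floor_le_iff le_ceiling_iff)
qed simp

lemma sep0: assumes "free_ultrafilter_on F" "y \<noteq> 0"
  shows "\<exists>U V. openin (tauA F A) U \<and> openin (tauA F A) V \<and> 0 \<in> U \<and> y \<in> V \<and> disjnt U V"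
proof -
  define r where "r = \<bar>y\<bar> / 2"
  have r: "r > 0" using assms r_def by auto
  have "{n::int. real_of_int n \<in> - cball y r} = - {n::int. \<bar>real_of_int n - y\<bar> \<le> r}"
    by (auto simp: dist_real_def abs_minus_commute)
  then have "{n::int. real_of_int n \<in> - cball y r} \<in> F" using fu_cofinite[OF assms(1) finite_int_bounded] by simp
  then have "openin (tauF F) (- cball y r)" unfolding openin_tauF[OF assms(1)] fpred_def by auto
  then have U: "openin (tauA F A) (- cball y r)" using tauF_le_tauA[OF assms(1)] unfolding topo_le_def by blast
  have V: "openin (tauA F A) (ball y r - {0})" by (rule tauA_open_noz[OF assms(1)]) auto
  show ?thesis
    by (rule exI[of _ "- cball y r"], rule exI[of _ "ball y r - {0}"])
       (use U V r assms in \<open>auto simp: disjnt_def r_def dist_real_def\<close>)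
qed

lemma tauA_Hausdorff: assumes "free_ultrafilter_on F" shows "Hausdorff_space (tauA F A)"
  unfolding Hausdorff_space_def
proof (intro allI impI)
  fix x y :: real assume xy: "x \<in> topspace (tauA F A) \<and> y \<in> topspace (tauA F A) \<and> x \<noteq> y"
  show "\<exists>U V. openin (tauA F A) U \<and> openin (tauA F A) V \<and> x \<in> U \<and> y \<in> V \<and> disjnt U V"
  proof (cases "x = 0")
    case True then show ?thesis using sep0[OF assms, of y A] xy by auto
  next
    case x: False
    show ?thesis
    proof (cases "y = 0")
      case True then show ?thesis using sep0[OF assms x, of A] xy by (metis disjnt_sym)
    next
      case y: False
      define r where "r = dist x y / 2"
      have r: "r > 0" using xy unfolding r_def by (simp add: dist_real_def)
      have U: "openin (tauA F A) (ball x r - {0})" by (rule tauA_open_noz[OF assms]) auto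
      have V: "openin (tauA F A) (ball y r - {0})" by (rule tauA_open_noz[OF assms]) auto
      have "disjnt (ball x r) (ball y r)" unfolding disjnt_def r_def
        by (auto simp: dist_real_def abs_if split: if_splits)
      then show ?thesis using U V r x y
        by (intro exI[of _ "ball x r - {0}"] exI[of _ "ball y r - {0}"]) (auto simp: disjnt_def)
    qed
  qed
qed

lemma tauA_L0: assumes "free_ultrafilter_on F" shows "tauA F A \<in> L0"
proof -
  have "topo_le (tauA F A) euclidean" unfolding topo_le_def using tauA_open[OF assms] by simp
  moreover have "C_set (tauA F A) \<subseteq> {0}"
  proof
    fix a assume a: "a \<in> C_set (tauA F A)"
    show "a \<in> {0}"
    proof (rule ccontr)
      assume "a \<notin> {0}"
      have "nbhds (tauA F A) a = nbhds euclidean a"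
      proof
        show "nbhds (tauA F A) a \<subseteq> nbhds euclidean a" unfolding nbhds_def using tauA_open[OF assms] by auto
        show "nbhds euclidean a \<subseteq> nbhds (tauA F A) a" unfolding nbhds_def
        proof clarify
          fix V U assume "openin euclidean U" "a \<in> U" "U \<subseteq> V"
          then show "\<exists>U. openin (tauA F A) U \<and> a \<in> U \<and> U \<subseteq> V" using \<open>a \<notin> {0}\<close>
            by (intro exI[of _ "U - {0}"]) (auto intro: tauA_open_noz[OF assms])
        qed
      qed
      then show False using a unfolding C_set_def by simp
    qed
  qed
  ultimately show ?thesis unfolding L0_def coarser_Hausdorff_def
    using topspace_tauA[OF assms] tauA_Hausdorff[OF assms] by auto
qed



definition Eset :: "real \<Rightarrow> real set" where
  "Eset q = (\<Union>x\<in> of_int ` (- {0}). \<Union>y \<in> insert 0 (range (xs q)). {x + y})"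

lemma int_close_eq: assumes "\<bar>real_of_int n - real_of_int m\<bar> < 1" shows "n = m"
proof -
  have "\<bar>real_of_int (n - m)\<bar> < 1" using assms by simp
  then have "\<bar>n - m\<bar> < 1" by linarith
  then show ?thesis by simp
qed

lemma Eset_closed: "closed (Eset q)"
  unfolding Eset_def
  by (intro closed_compact_sums closed_of_int_image compact_sequence_with_limit xs_lim)

lemma zero_notin_Eset: assumes "0 \<le> q" "q < 1" shows "0 \<notin> Eset q"
proof
  assume "0 \<in> Eset q"
  then obtain m b where mb: "m \<noteq> 0" "b \<in> insert 0 (range (xs q))" "0 = real_of_int m + b"
    unfolding Eset_def by auto
  have "0 \<le> b" "b < 1/3" using mb(2) xs_bounds[OF assms] by (auto simp: less_imp_le)
  then have "\<bar>real_of_int m - real_of_int 0\<bar> < 1" using mb(3) by simp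
  then show False using int_close_eq mb(1) by blast
qed

lemma other_notin_Eset: assumes "0 \<le> q" "q < 1" "0 \<le> q'" "q' < 1" "q \<noteq> q'"
  shows "real_of_int n + xs q' k \<notin> Eset q"
proof
  assume "real_of_int n + xs q' k \<in> Eset q"
  then obtain x b where xb: "x \<in> of_int ` (- {0})" "b \<in> insert 0 (range (xs q))" "real_of_int n + xs q' k = x + b"
    unfolding Eset_def by blast
  then obtain m where "m \<noteq> 0" "x = real_of_int m" by auto
  then have mb: "m \<noteq> 0" "b \<in> insert 0 (range (xs q))" "real_of_int n + xs q' k = real_of_int m + b"
    using xb by auto
  have x: "0 < xs q' k" "xs q' k < 1/3" using xs_bounds[OF assms(3,4)] by auto
  show False
  proof (cases "b = 0")
    case True
    then have "\<bar>real_of_int n - real_of_int m\<bar> < 1" using mb(3) x by simp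
    then have "n = m" by (rule int_close_eq)
    then have "xs q' k = 0" using mb(3) True by simp
    then show False using x by simp
  next
    case False
    then obtain j where j: "b = xs q j" using mb(2) by auto
    have "0 < xs q j" "xs q j < 1/3" using xs_bounds[OF assms(1,2)] by auto
    then have "\<bar>real_of_int n - real_of_int m\<bar> < 1" using mb(3) x j by simp
    then have "n = m" by (rule int_close_eq)
    then have "xs q' k = xs q j" using mb(3) j by simp
    then show False using xs_inj[OF assms(3,4,1,2)] assms(5) by metis
  qed
qed

lemma tauA_distinct:
  assumes F: "free_ultrafilter_on F" and q: "0 \<le> q" "q < 1" "q \<in> A" "q \<notin> B"
  shows "tauA F A \<noteq> tauA F B"
proof -
  define U where "U = - Eset q"
  have oU: "open U" unfolding U_def using Eset_closed by (simp add: open_Compl)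
  have 0: "0 \<in> U" unfolding U_def using zero_notin_Eset[OF q(1,2)] by simp
  have Hq: "HH F q' U" if "q' \<in> {0..<1}" "q' \<noteq> q" for q'
  proof -
    have "{n::int. \<exists>e>0. \<forall>k. xs q' k < e \<longrightarrow> real_of_int n + xs q' k \<in> U} = UNIV"
      using other_notin_Eset[OF q(1,2), of q'] that unfolding U_def by (auto intro!: exI[of _ 1])
    then show ?thesis unfolding HH_def using fu_UNIV[OF F] by simp
  qed
  have "openin (tauA F A) U" unfolding openin_tauA[OF F] tpred_def
  proof (intro conjI impI ballI oU)
    fix q' assume "q' \<in> {0..<1} - A"
    then show "HH F q' U" using Hq q(3) by blast
  qed
  moreover have "\<not> HH F q U"
  proof -
    have "{n::int. \<exists>e>0. \<forall>k. xs q k < e \<longrightarrow> real_of_int n + xs q k \<in> U} \<subseteq> {0}"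
    proof
      fix n assume "n \<in> {n::int. \<exists>e>0. \<forall>k. xs q k < e \<longrightarrow> real_of_int n + xs q k \<in> U}"
      then obtain e where e: "e > 0" "\<forall>k. xs q k < e \<longrightarrow> real_of_int n + xs q k \<in> U" by auto
      obtain k where k: "xs q k < e" using xs_small[OF q(1,2) e(1)] by auto
      have "n \<noteq> 0 \<Longrightarrow> real_of_int n + xs q k \<in> Eset q" unfolding Eset_def by auto
      then show "n \<in> {0}" using e k unfolding U_def by auto
    qed
    then show ?thesis unfolding HH_def using fu_sub0[OF F] by blast
  qed
  then have "\<not> openin (tauA F B) U" unfolding openin_tauA[OF F] tpred_def using 0 q by auto
  ultimately show ?thesis by metis
qed



definition lexle :: "'a rel \<Rightarrow> 'a set \<Rightarrow> 'a set \<Rightarrow> bool" where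
  "lexle r X Y \<longleftrightarrow> X = Y \<or> (\<exists>m \<in> Y - X. \<forall>z. (z,m) \<in> r \<and> z \<noteq> m \<longrightarrow> (z \<in> X \<longleftrightarrow> z \<in> Y))"

lemma wo_facts:
  assumes "Well_order r"
  shows "trans r" "antisym r" "total_on (Field r) r" "wf (r - Id)"
  using assms unfolding well_order_on_def linear_order_on_def partial_order_on_def preorder_on_def
  by auto

lemma wo_min:
  assumes "Well_order r" "W \<noteq> {}"
  shows "\<exists>m\<in>W. \<forall>z. (z,m) \<in> r \<and> z \<noteq> m \<longrightarrow> z \<notin> W"
proof -
  obtain x where "x \<in> W" using assms by auto
  then obtain m where "m \<in> W" "\<forall>y. (y, m) \<in> r - Id \<longrightarrow> y \<notin> W"
    using wo_facts(4)[OF assms(1)] unfolding wf_eq_minimal by metis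
  then show ?thesis by auto
qed

lemma lexle_total:
  assumes "Well_order r" shows "lexle r X Y \<or> lexle r Y X"
proof (cases "X = Y")
  case False
  then have "(X - Y) \<union> (Y - X) \<noteq> {}" by auto
  then obtain m where m: "m \<in> (X - Y) \<union> (Y - X)" "\<forall>z. (z,m) \<in> r \<and> z \<noteq> m \<longrightarrow> z \<notin> (X - Y) \<union> (Y - X)"
    using wo_min[OF assms] by metis
  then have agree: "\<forall>z. (z,m) \<in> r \<and> z \<noteq> m \<longrightarrow> (z \<in> X \<longleftrightarrow> z \<in> Y)" by blast
  show ?thesis
  proof (cases "m \<in> Y - X")
    case True then show ?thesis unfolding lexle_def using agree by blast
  next
    case False then have "m \<in> X - Y" using m by blast
    then show ?thesis unfolding lexle_def using agree by blast
  qed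
qed (simp add: lexle_def)

lemma lexle_trans:
  assumes wo: "Well_order r" and sub: "X \<subseteq> Field r" "Y \<subseteq> Field r" "Z \<subseteq> Field r"
    and xy: "lexle r X Y" and yz: "lexle r Y Z"
  shows "lexle r X Z"
proof (cases "X = Y \<or> Y = Z")
  case True then show ?thesis using xy yz by auto
next
  case False
  then obtain m1 where m1: "m1 \<in> Y - X" "\<forall>z. (z,m1) \<in> r \<and> z \<noteq> m1 \<longrightarrow> (z \<in> X \<longleftrightarrow> z \<in> Y)"
    using xy unfolding lexle_def by blast
  obtain m2 where m2: "m2 \<in> Z - Y" "\<forall>z. (z,m2) \<in> r \<and> z \<noteq> m2 \<longrightarrow> (z \<in> Y \<longleftrightarrow> z \<in> Z)"
    using yz False unfolding lexle_def by blast
  have F: "m1 \<in> Field r" "m2 \<in> Field r" using m1 m2 sub by auto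
  have ne: "m1 \<noteq> m2" using m1 m2 by auto
  note tr = wo_facts(1)[OF wo] and an = wo_facts(2)[OF wo]
  have "(m1, m2) \<in> r \<or> (m2, m1) \<in> r" using wo_facts(3)[OF wo] F ne unfolding total_on_def by blast
  then show ?thesis
  proof
    assume a: "(m1, m2) \<in> r"
    have "m1 \<in> Z - X" using m1 m2(2) a ne by blast
    moreover have "\<forall>z. (z,m1) \<in> r \<and> z \<noteq> m1 \<longrightarrow> (z \<in> X \<longleftrightarrow> z \<in> Z)"
    proof (intro allI impI)
      fix z assume z: "(z,m1) \<in> r \<and> z \<noteq> m1"
      have "(z, m2) \<in> r" using z a tr unfolding trans_def by blast
      moreover have "z \<noteq> m2" using z a an ne unfolding antisym_def by blast
      ultimately show "z \<in> X \<longleftrightarrow> z \<in> Z" using m1(2) m2(2) z by blast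
    qed
    ultimately show ?thesis unfolding lexle_def by blast
  next
    assume a: "(m2, m1) \<in> r"
    have "m2 \<in> Z - X" using m2 m1(2) a ne by blast
    moreover have "\<forall>z. (z,m2) \<in> r \<and> z \<noteq> m2 \<longrightarrow> (z \<in> X \<longleftrightarrow> z \<in> Z)"
    proof (intro allI impI)
      fix z assume z: "(z,m2) \<in> r \<and> z \<noteq> m2"
      have "(z, m1) \<in> r" using z a tr unfolding trans_def by blast
      moreover have "z \<noteq> m1" using z a an ne unfolding antisym_def by blast
      ultimately show "z \<in> X \<longleftrightarrow> z \<in> Z" using m1(2) m2(2) z by blast
    qed
    ultimately show ?thesis unfolding lexle_def by blast
  qed
qed

lemma lexle_subset:
  assumes wo: "Well_order r" and "N \<subseteq> Y"
  shows "lexle r N Y"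
proof (cases "N = Y")
  case False
  then have "Y - N \<noteq> {}" using assms by auto
  then obtain m where m: "m \<in> Y - N" "\<forall>z. (z,m) \<in> r \<and> z \<noteq> m \<longrightarrow> z \<notin> Y - N"
    using wo_min[OF wo] by metis
  then show ?thesis unfolding lexle_def using assms(2) by blast
qed (simp add: lexle_def)

definition nodes :: "'a rel \<Rightarrow> 'a set set" where
  "nodes r = (\<lambda>(a,T). insert a T) ` (SIGMA a:Field r. Pow (underS r a))"

definition Lset :: "'a rel \<Rightarrow> 'a set \<Rightarrow> 'a set set" where
  "Lset r X = {N \<in> nodes r. lexle r N X}"

lemma nodes_sub: "N \<in> nodes r \<Longrightarrow> N \<subseteq> Field r"
  unfolding nodes_def underS_def Field_def by auto

lemma Lset_chain:
  assumes wo: "Well_order r" and "X \<subseteq> Field r" "Y \<subseteq> Field r"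
  shows "Lset r X \<subseteq> Lset r Y \<or> Lset r Y \<subseteq> Lset r X"
proof -
  have *: "Lset r A \<subseteq> Lset r B" if "A \<subseteq> Field r" "B \<subseteq> Field r" "lexle r A B" for A B
  proof
    fix N assume "N \<in> Lset r A"
    then have "N \<in> nodes r" "lexle r N A" unfolding Lset_def by auto
    then have "lexle r N B" using lexle_trans[OF wo nodes_sub[of N r] that(1,2)] that(3) by blast
    then show "N \<in> Lset r B" using \<open>N \<in> nodes r\<close> unfolding Lset_def by blast
  qed
  show ?thesis using lexle_total[OF wo, of X Y] *[of X Y] *[of Y X] assms by blast
qed

lemma Lset_sep:
  assumes wo: "Well_order r" and sub: "X \<subseteq> Field r" "Y \<subseteq> Field r" and xy: "lexle r X Y" "X \<noteq> Y"
  shows "Lset r X \<noteq> Lset r Y"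
proof -
  obtain m where m: "m \<in> Y - X" "\<forall>z. (z,m) \<in> r \<and> z \<noteq> m \<longrightarrow> (z \<in> X \<longleftrightarrow> z \<in> Y)"
    using xy unfolding lexle_def by blast
  define N where "N = insert m (X \<inter> underS r m)"
  have "N \<in> nodes r" unfolding N_def nodes_def using m sub by (auto intro!: image_eqI[of _ _ "(m, X \<inter> underS r m)"])
  have "N \<subseteq> Y" unfolding N_def underS_def using m by auto
  then have "N \<in> Lset r Y" unfolding Lset_def using \<open>N \<in> nodes r\<close> lexle_subset[OF wo] by blast
  moreover have "\<not> lexle r N X"
  proof
    assume "lexle r N X"
    moreover have "N \<noteq> X" using m N_def by auto
    ultimately obtain m' where m': "m' \<in> X - N" "\<forall>z. (z,m') \<in> r \<and> z \<noteq> m' \<longrightarrow> (z \<in> N \<longleftrightarrow> z \<in> X)"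
      unfolding lexle_def by blast
    have ne: "m' \<noteq> m" using m m' by auto
    have "m \<in> Field r" "m' \<in> Field r" using m m' sub by auto
    then have "(m', m) \<in> r \<or> (m, m') \<in> r" using wo_facts(3)[OF wo] ne unfolding total_on_def by blast
    then show False
    proof
      assume "(m', m) \<in> r"
      then have "m' \<in> N" using m' ne unfolding N_def underS_def by auto
      then show False using m' by auto
    next
      assume "(m, m') \<in> r"
      then show False using m'(2) ne m unfolding N_def by auto
    qed
  qed
  then have "N \<notin> Lset r X" unfolding Lset_def by blast
  ultimately show ?thesis by blast
qed

lemma Lset_inj:
  assumes wo: "Well_order r" shows "inj_on (Lset r) (Pow (Field r))"
proof (rule inj_onI)
  fix X Y assume "X \<in> Pow (Field r)" "Y \<in> Pow (Field r)" "Lset r X = Lset r Y"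
  then show "X = Y" using Lset_sep[OF wo, of X Y] Lset_sep[OF wo, of Y X] lexle_total[OF wo, of X Y] by auto
qed



context includes cardinal_syntax
begin

lemma underS_lesspoll:
  assumes "a \<in> S" shows "underS |S| a \<prec> S"
proof -
  have lt: "|underS |S| a| <o |S|"
    by (rule card_of_underS[OF card_of_Card_order]) (simp add: Field_card_of assms)
  then have "|underS |S| a| \<le>o |S|" by (rule ordLess_imp_ordLeq)
  then have "underS |S| a \<lesssim> S" unfolding lepoll_def by (simp only: card_of_ordLeq[symmetric])
  moreover have "\<not> underS |S| a \<approx> S" unfolding eqpoll_iff_card_of_ordIso by (rule not_ordLess_ordIso[OF lt])
  ultimately show ?thesis unfolding lesspoll_def by (intro conjI)
qed

lemma real_sq_lepoll: "(UNIV::real set) \<times> (UNIV::real set) \<lesssim> (UNIV::real set)"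
proof -
  have "infinite (UNIV::real set)" by (rule infinite_UNIV_char_0)
  then have "|(UNIV::real set) \<times> (UNIV::real set)| =o |(UNIV::real set)|" by (rule card_of_Times_same_infinite)
  then show ?thesis using eqpoll_iff_card_of_ordIso eqpoll_imp_lepoll by blast
qed

lemma real_lepoll_unit: "(UNIV::real set) \<lesssim> {0..<(1::real)}"
  unfolding lepoll_def
proof (intro exI conjI)
  let ?h = "\<lambda>x::real. (arctan x + pi/2) / pi"
  show "inj_on ?h UNIV" by (rule inj_onI) (simp add: arctan_eq_iff)
  show "?h ` UNIV \<subseteq> {0..<1}"
  proof
    fix y assume "y \<in> ?h ` UNIV"
    then obtain x where x: "y = ?h x" by auto
    have "- (pi/2) < arctan x" "arctan x < pi/2" using arctan_bounded by auto
    then have a: "0 < arctan x + pi/2" "arctan x + pi/2 < pi" by linarith+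
    have "0 \<le> (arctan x + pi/2) / pi" using a pi_gt_zero by (intro divide_nonneg_pos) auto
    moreover have "(arctan x + pi/2) / pi < 1" using a pi_gt_zero by (subst divide_less_eq_1_pos) auto
    ultimately show "y \<in> {0..<1}" unfolding x by simp
  qed
qed

lemma nodes_lepoll:
  assumes "lambda_set S" shows "nodes |S| \<lesssim> {0..<(1::real)}"
proof -
  have "nodes |S| \<lesssim> (SIGMA a:Field |S|. Pow (underS |S| a))" unfolding nodes_def by (rule image_lepoll)
  also have "\<dots> \<lesssim> (SIGMA a:(UNIV::real set). (UNIV::real set))"
  proof (rule Sigma_lepoll_mono)
    fix a assume "a \<in> Field |S|"
    then have "underS |S| a \<prec> S" by (intro underS_lesspoll) (simp add: Field_card_of)
    moreover have "\<forall>T \<subseteq> (UNIV::real set). T \<prec> S \<longrightarrow> Pow T \<lesssim> (UNIV::real set)"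
      using assms unfolding lambda_set_def by (elim conjE)
    ultimately show "Pow (underS |S| a) \<lesssim> (UNIV::real set)" by simp
  qed simp
  also have "\<dots> \<lesssim> (UNIV::real set)" by (rule real_sq_lepoll)
  also have "\<dots> \<lesssim> {0..<(1::real)}" by (rule real_lepoll_unit)
  finally show ?thesis .
qed

end

theorem theorem9:
  fixes F :: "int set set" and S :: "real set"
  assumes "free_ultrafilter_on F"
    and "lambda_set S"
  shows "\<exists>K. K \<subseteq> L0 \<and> is_chain_topo K \<and> K \<approx> Pow S \<and> (\<forall>\<tau>\<in>K. topo_le (tauF F) \<tau>)"
proof -
  note F = assms(1)
  define r where "r = card_of S"
  have wo: "Well_order r" unfolding r_def by (rule card_of_Well_order)
  have Fr: "Field r = S" unfolding r_def by (rule Field_card_of)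
  have "nodes r \<lesssim> {0..<(1::real)}" unfolding r_def by (rule nodes_lepoll[OF assms(2)])
  then obtain e where e: "inj_on e (nodes r)" "e ` nodes r \<subseteq> {0..<(1::real)}"
    unfolding lepoll_def by blast
  have Lsub: "Lset r X \<subseteq> nodes r" for X unfolding Lset_def by auto
  define \<Phi> where "\<Phi> = (\<lambda>X. tauA F (e ` Lset r X))"
  define K where "K = \<Phi> ` Pow S"
  have inj: "inj_on \<Phi> (Pow S)"
  proof (rule inj_onI)
    fix X Y assume XY: "X \<in> Pow S" "Y \<in> Pow S" "\<Phi> X = \<Phi> Y"
    show "X = Y"
    proof (rule ccontr)
      assume "X \<noteq> Y"
      have "Lset r X \<noteq> Lset r Y"
      proof
        assume "Lset r X = Lset r Y"
        then have "X = Y" by (rule inj_onD[OF Lset_inj[OF wo]]) (use XY Fr in auto)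
        then show False using \<open>X \<noteq> Y\<close> by simp
      qed
      then have ne: "e ` Lset r X \<noteq> e ` Lset r Y" using inj_on_image_eq_iff[OF e(1) Lsub Lsub] by simp
      have sub: "e ` Lset r X \<subseteq> {0..<1}" "e ` Lset r Y \<subseteq> {0..<1}"
        using e(2) image_mono[OF Lsub] by (meson order_trans)+
      from ne obtain q where "(q \<in> e ` Lset r X \<and> q \<notin> e ` Lset r Y) \<or> (q \<in> e ` Lset r Y \<and> q \<notin> e ` Lset r X)"
        unfolding set_eq_iff by meson
      then show False
      proof
        assume q: "q \<in> e ` Lset r X \<and> q \<notin> e ` Lset r Y"
        then have "0 \<le> q" "q < 1" using sub by auto
        then show False using tauA_distinct[OF F \<open>0 \<le> q\<close> \<open>q < 1\<close>, of "e ` Lset r X" "e ` Lset r Y"] q XY(3)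
          unfolding \<Phi>_def by simp
      next
        assume q: "q \<in> e ` Lset r Y \<and> q \<notin> e ` Lset r X"
        then have "0 \<le> q" "q < 1" using sub by auto
        then show False using tauA_distinct[OF F \<open>0 \<le> q\<close> \<open>q < 1\<close>, of "e ` Lset r Y" "e ` Lset r X"] q XY(3)
          unfolding \<Phi>_def by simp
      qed
    qed
  qed
  have "K \<subseteq> L0" unfolding K_def \<Phi>_def using tauA_L0[OF F] by auto
  moreover have "is_chain_topo K" unfolding is_chain_topo_def K_def
  proof (intro ballI)
    fix \<sigma> \<tau> assume "\<sigma> \<in> \<Phi> ` Pow S" "\<tau> \<in> \<Phi> ` Pow S"
    then obtain X Y where XY: "X \<in> Pow S" "Y \<in> Pow S" "\<sigma> = \<Phi> X" "\<tau> = \<Phi> Y" by blast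
    from XY(1,2) have "Lset r X \<subseteq> Lset r Y \<or> Lset r Y \<subseteq> Lset r X" by (intro Lset_chain[OF wo]) (auto simp: Fr)
    moreover have "topo_le (\<Phi> X) (\<Phi> Y)" if "Lset r X \<subseteq> Lset r Y" for X Y
      unfolding \<Phi>_def using that by (intro tauA_mono[OF F] image_mono)
    ultimately show "topo_le \<sigma> \<tau> \<or> topo_le \<tau> \<sigma>" unfolding XY by blast
  qed
  moreover have "K \<approx> Pow S" unfolding K_def by (rule inj_on_image_eqpoll_self[OF inj])
  moreover have "\<forall>\<tau>\<in>K. topo_le (tauF F) \<tau>" unfolding K_def \<Phi>_def using tauF_le_tauA[OF F] by auto
  ultimately show ?thesis by (intro exI[of _ K]) simp
qed


end
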